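(* In a combinatorial auction where all bidders other than $i$ play piecewise constant strategies, every cell $S$ of bidder $i$'s action space has a unique Pareto point, and this Pareto point is a vertex of $S$.
   Context: A combinatorial auction sells goods $M$ to bidders $N$; each bidder $i$ bids a vector $b_i\in\mathbb{R}_{\ge0}^r$ on his $r$ bundles of interest (other bundles bid $0$). An allocation gives each bidder one bundle of interest or $\emptyset$, pairwise disjoint; $X(b)$ is the set of allocations maximizing reported welfare $\sum_i b_i(x_i)$. Bidders' valuations are independent random variables $V_j$ and strategies $s_j$ map valuations to bids; piecewise constant means finitely many values, so $b_{-i}=s_{-i}(V_{-i})$ has finite support. A cell of bidder $i$'s action space $\mathbb{R}_{\ge0}^r$ is a maximal (with respect to inclusion) connected region $S$ such that for every $b_{-i}$ with positive probability there exists an allocation $x$ with $x\in X(b_i,b_{-i})$ for all $b_i\in S$; cells are convex polytopes. A Pareto point of a cell $S$ is a point $b_i\in S$ such that there is no $b_i'\in S$ with $b_i'\le b_i$ coordinatewise and $b_i'\neq b_i$. *)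

theory Defs
  imports "HOL-Probability.Probability"
begin

text \<open>Bidder i's bid is
  a vector in real^'r, where 'r indexes i's r bundles of interest via beta.\<close>

definition valid_bid :: "'g set set \<Rightarrow> ('g set \<Rightarrow> real) \<Rightarrow> bool" where
  "valid_bid I b \<longleftrightarrow> (\<forall>T. 0 \<le> b T) \<and> (\<forall>T. T \<notin> I \<longrightarrow> b T = 0)"

definition bid_of_vec :: "('r \<Rightarrow> 'g set) \<Rightarrow> real ^ 'r \<Rightarrow> 'g set \<Rightarrow> real" where
  "bid_of_vec beta v T = (if T \<in> range beta then v $ (inv beta T) else 0)"

definition allocation :: "'n set \<Rightarrow> ('n \<Rightarrow> 'g set set) \<Rightarrow> ('n \<Rightarrow> 'g set) \<Rightarrow> bool" where
  "allocation N I x \<longleftrightarrow>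
     (\<forall>j\<in>N. x j = {} \<or> x j \<in> I j) \<and>
     (\<forall>j\<in>N. \<forall>j'\<in>N. j \<noteq> j' \<longrightarrow> x j \<inter> x j' = {}) \<and>
     (\<forall>j. j \<notin> N \<longrightarrow> x j = {})"

definition welfare :: "'n set \<Rightarrow> ('n \<Rightarrow> 'g set \<Rightarrow> real) \<Rightarrow> ('n \<Rightarrow> 'g set) \<Rightarrow> real" where
  "welfare N b x = (\<Sum>j\<in>N. b j (x j))"

definition opt_allocs :: "'n set \<Rightarrow> ('n \<Rightarrow> 'g set set) \<Rightarrow> ('n \<Rightarrow> 'g set \<Rightarrow> real)
    \<Rightarrow> ('n \<Rightarrow> 'g set) set" where
  "opt_allocs N I b = {x. allocation N I x \<and>
      (\<forall>y. allocation N I y \<longrightarrow> welfare N b y \<le> welfare N b x)}"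

definition combine :: "'n \<Rightarrow> ('r \<Rightarrow> 'g set) \<Rightarrow> real ^ 'r \<Rightarrow> ('n \<Rightarrow> 'g set \<Rightarrow> real)
    \<Rightarrow> 'n \<Rightarrow> 'g set \<Rightarrow> real" where
  "combine i beta v bo = (\<lambda>j. if j = i then bid_of_vec beta v else bo j)"

definition action_space :: "(real ^ 'r) set" where
  "action_space = {v. \<forall>k. 0 \<le> v $ k}"

definition admissible_region :: "'n set \<Rightarrow> ('n \<Rightarrow> 'g set set) \<Rightarrow> 'n \<Rightarrow> ('r \<Rightarrow> 'g set)
    \<Rightarrow> ('n \<Rightarrow> 'g set \<Rightarrow> real) set \<Rightarrow> (real ^ 'r) set \<Rightarrow> bool" where
  "admissible_region N I i beta Bpos S \<longleftrightarrow>
     S \<subseteq> action_space \<and> connected S \<and>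
     (\<forall>bo\<in>Bpos. \<exists>x. \<forall>v\<in>S. x \<in> opt_allocs N I (combine i beta v bo))"

definition is_cell :: "'n set \<Rightarrow> ('n \<Rightarrow> 'g set set) \<Rightarrow> 'n \<Rightarrow> ('r \<Rightarrow> 'g set)
    \<Rightarrow> ('n \<Rightarrow> 'g set \<Rightarrow> real) set \<Rightarrow> (real ^ 'r) set \<Rightarrow> bool" where
  "is_cell N I i beta Bpos S \<longleftrightarrow>
     admissible_region N I i beta Bpos S \<and>
     (\<forall>T. admissible_region N I i beta Bpos T \<and> S \<subseteq> T \<longrightarrow> T = S)"

definition pareto_point :: "(real ^ 'r) set \<Rightarrow> real ^ 'r \<Rightarrow> bool" where
  "pareto_point S p \<longleftrightarrow> p \<in> S \<and> \<not> (\<exists>q\<in>S. (\<forall>k. q $ k \<le> p $ k) \<and> q \<noteq> p)"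

definition others_bids :: "'n set \<Rightarrow> 'n \<Rightarrow> ('n \<Rightarrow> 'v \<Rightarrow> 'g set \<Rightarrow> real)
    \<Rightarrow> ('n \<Rightarrow> 'w \<Rightarrow> 'v) \<Rightarrow> 'w \<Rightarrow> 'n \<Rightarrow> 'g set \<Rightarrow> real" where
  "others_bids N i s V w = (\<lambda>j. if j \<in> N - {i} then s j (V j w) else (\<lambda>_. 0))"

definition positive_profiles :: "'w measure \<Rightarrow> 'n set \<Rightarrow> 'n \<Rightarrow> ('n \<Rightarrow> 'v \<Rightarrow> 'g set \<Rightarrow> real)
    \<Rightarrow> ('n \<Rightarrow> 'w \<Rightarrow> 'v) \<Rightarrow> ('n \<Rightarrow> 'g set \<Rightarrow> real) set" where
  "positive_profiles Pr N i s V =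
     {bo. measure Pr {w \<in> space Pr. others_bids N i s V w = bo} > 0}"

end

theory Submission
  imports Defs
begin

definition vmin :: "real ^ 'r \<Rightarrow> real ^ 'r \<Rightarrow> real ^ 'r" where
  "vmin u w = (\<chi> k. min (u $ k) (w $ k))"

lemma bov_mono: "(\<forall>k. u $ k \<le> w $ k) \<Longrightarrow> bid_of_vec beta u T \<le> bid_of_vec beta w T"
  by (simp add: bid_of_vec_def)

lemma bov_min: "bid_of_vec beta (vmin u w) T = bid_of_vec beta u T \<or>
    bid_of_vec beta (vmin u w) T = bid_of_vec beta w T"
  by (simp add: bid_of_vec_def vmin_def min_def)

lemma bov_lin: "bid_of_vec beta (a *\<^sub>R u + b *\<^sub>R w) T =
    a * bid_of_vec beta u T + b * bid_of_vec beta w T"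
  by (simp add: bid_of_vec_def)

lemma bov_cont: "continuous_on UNIV (\<lambda>v. bid_of_vec beta v T)"
  unfolding bid_of_vec_def
  by (cases "T \<in> range beta") (auto intro!: continuous_intros)

lemma welfare_combine:
  assumes "finite N" "i \<in> N"
  shows "welfare N (combine i beta v bo) y =
    bid_of_vec beta v (y i) + (\<Sum>j\<in>N-{i}. bo j (y j))"
proof -
  have "welfare N (combine i beta v bo) y =
      combine i beta v bo i (y i) + (\<Sum>j\<in>N-{i}. combine i beta v bo j (y j))"
    unfolding welfare_def using assms by (simp add: sum.remove)
  also have "(\<Sum>j\<in>N-{i}. combine i beta v bo j (y j)) = (\<Sum>j\<in>N-{i}. bo j (y j))"
    by (rule sum.cong) (auto simp: combine_def)
  finally show ?thesis by (simp add: combine_def)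
qed

lemma opt_iff:
  assumes "finite N" "i \<in> N"
  shows "x \<in> opt_allocs N I (combine i beta v bo) \<longleftrightarrow>
    allocation N I x \<and> (\<forall>y. allocation N I y \<longrightarrow>
      bid_of_vec beta v (y i) + (\<Sum>j\<in>N-{i}. bo j (y j))
        \<le> bid_of_vec beta v (x i) + (\<Sum>j\<in>N-{i}. bo j (x j)))"
  unfolding opt_allocs_def by (simp add: welfare_combine[OF assms])

lemma opt_nonempty:
  assumes "finite N" "\<And>j. j \<in> N \<Longrightarrow> finite (I j)"
  shows "\<exists>x. x \<in> opt_allocs N I b"
proof -
  define A where "A = {x. allocation N I x}"
  have inj: "inj_on (\<lambda>x. restrict x N) A"
  proof (rule inj_onI)
    fix x y assume x: "x \<in> A" and y: "y \<in> A" and eq: "restrict x N = restrict y N"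
    show "x = y"
    proof
      fix j show "x j = y j"
      proof (cases "j \<in> N")
        case True
        then show ?thesis using eq by (metis restrict_apply')
      next
        case False
        with x y show ?thesis by (simp add: A_def allocation_def)
      qed
    qed
  qed
  have "(\<lambda>x. restrict x N) ` A \<subseteq> PiE N (\<lambda>j. insert {} (I j))"
    unfolding A_def allocation_def by auto
  moreover have "finite (PiE N (\<lambda>j. insert {} (I j)))"
    using assms by (intro finite_PiE) auto
  ultimately have "finite ((\<lambda>x. restrict x N) ` A)" by (rule finite_subset)
  then have fA: "finite A" using inj finite_imageD by blast
  have "(\<lambda>j. {}) \<in> A" unfolding A_def allocation_def by auto
  then have ne: "welfare N b ` A \<noteq> {}" by auto
  have "Max (welfare N b ` A) \<in> welfare N b ` A" using fA ne by (intro Max_in) auto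
  then obtain x where x: "x \<in> A" "welfare N b x = Max (welfare N b ` A)" by auto
  have "\<forall>y. allocation N I y \<longrightarrow> welfare N b y \<le> welfare N b x"
    using x fA by (auto simp: A_def intro!: Max_ge)
  then show ?thesis using x unfolding opt_allocs_def A_def by auto
qed

theorem lemma3:
  fixes M :: "'g set" and N :: "'n set" and i :: 'n
    and I :: "'n \<Rightarrow> 'g set set" and beta :: "'r::finite \<Rightarrow> 'g set"
    and Pr :: "'w measure" and Mv :: "'n \<Rightarrow> 'v measure"
    and V :: "'n \<Rightarrow> 'w \<Rightarrow> 'v" and s :: "'n \<Rightarrow> 'v \<Rightarrow> 'g set \<Rightarrow> real"
    and S :: "(real ^ 'r) set"
  assumes "finite M" and "finite N" and "i \<in> N"
    and "\<And>j. j \<in> N \<Longrightarrow> finite (I j)"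
    and "\<And>j T. j \<in> N \<Longrightarrow> T \<in> I j \<Longrightarrow> T \<subseteq> M \<and> T \<noteq> {}"
    and "inj beta" and "range beta = I i"
    and "prob_space Pr"
    and "prob_space.indep_vars Pr Mv V N"
    and "\<And>j. j \<in> N - {i} \<Longrightarrow> s j \<in> measurable (Mv j) (count_space UNIV)"
    and "\<And>j v. j \<in> N - {i} \<Longrightarrow> valid_bid (I j) (s j v)"
    and "\<And>j. j \<in> N - {i} \<Longrightarrow> finite (range (s j))"
    and "is_cell N I i beta (positive_profiles Pr N i s V) S"
  shows "(\<exists>!p. pareto_point S p) \<and> (\<forall>p. pareto_point S p \<longrightarrow> p extreme_point_of S)"
proof -
  define B where "B = positive_profiles Pr N i s V"
  have cell: "is_cell N I i beta B S" using assms(13) B_def by simp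
  have finN: "finite N" and iN: "i \<in> N" using assms(2,3) .
  define F where "F = (\<lambda>T v. bid_of_vec beta v T)"
  define A where "A = (\<lambda>(bo::'n \<Rightarrow> 'g set \<Rightarrow> real) (y::'n \<Rightarrow> 'g set). \<Sum>j\<in>N-{i}. bo j (y j))"
  have opt: "x \<in> opt_allocs N I (combine i beta v bo) \<longleftrightarrow>
    allocation N I x \<and> (\<forall>y. allocation N I y \<longrightarrow> F (y i) v + A bo y \<le> F (x i) v + A bo x)"
    for x v bo unfolding F_def A_def by (rule opt_iff[OF finN iN])
  have adm: "admissible_region N I i beta B S" using cell unfolding is_cell_def by simp
  then obtain X where X: "\<And>bo v. bo \<in> B \<Longrightarrow> v \<in> S \<Longrightarrow> X bo \<in> opt_allocs N I (combine i beta v bo)"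
    unfolding admissible_region_def by metis
  have Ssub: "S \<subseteq> action_space" using adm unfolding admissible_region_def by simp
  have Sne: "S \<noteq> {}"
  proof
    assume "S = {}"
    have "admissible_region N I i beta B {0}"
      unfolding admissible_region_def action_space_def
      using opt_nonempty[OF finN assms(4)] by auto
    with cell \<open>S = {}\<close> show False unfolding is_cell_def by blast
  qed
  then obtain s0 where s0: "s0 \<in> S" by auto
  have allocX: "allocation N I (X bo)" if "bo \<in> B" for bo
    using X[OF that s0] opt by blast
  define C where "C = {v \<in> action_space. \<forall>bo\<in>B. X bo \<in> opt_allocs N I (combine i beta v bo)}"
  have SC: "S \<subseteq> C" unfolding C_def using Ssub X by auto
  have convC: "convex C"
    unfolding convex_def
  proof (intro ballI allI impI)
    fix u w and a b :: real
    assume u: "u \<in> C" and w: "w \<in> C" and ab: "0 \<le> a" "0 \<le> b" "a + b = 1"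
    show "a *\<^sub>R u + b *\<^sub>R w \<in> C"
      unfolding C_def
    proof (intro CollectI conjI ballI)
      show "a *\<^sub>R u + b *\<^sub>R w \<in> action_space"
        using u w ab unfolding C_def action_space_def by simp
    next
      fix bo assume bo: "bo \<in> B"
      have uo: "\<forall>y. allocation N I y \<longrightarrow> F (y i) u + A bo y \<le> F (X bo i) u + A bo (X bo)"
        using u bo opt unfolding C_def by blast
      have wo: "\<forall>y. allocation N I y \<longrightarrow> F (y i) w + A bo y \<le> F (X bo i) w + A bo (X bo)"
        using w bo opt unfolding C_def by blast
      have "\<forall>y. allocation N I y \<longrightarrow> F (y i) (a *\<^sub>R u + b *\<^sub>R w) + A bo y
          \<le> F (X bo i) (a *\<^sub>R u + b *\<^sub>R w) + A bo (X bo)"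
      proof (intro allI impI)
        fix y assume y: "allocation N I y"
        have 1: "a * (F (y i) u + A bo y) \<le> a * (F (X bo i) u + A bo (X bo))"
          using uo y ab by (intro mult_left_mono) auto
        have 2: "b * (F (y i) w + A bo y) \<le> b * (F (X bo i) w + A bo (X bo))"
          using wo y ab by (intro mult_left_mono) auto
        have e: "A bo z = a * A bo z + b * A bo z" for z
          using ab by (metis mult_1 distrib_right)
        show "F (y i) (a *\<^sub>R u + b *\<^sub>R w) + A bo y
          \<le> F (X bo i) (a *\<^sub>R u + b *\<^sub>R w) + A bo (X bo)"
          using 1 2 e[of y] e[of "X bo"] unfolding F_def bov_lin by (simp add: algebra_simps)
      qed
      then show "X bo \<in> opt_allocs N I (combine i beta (a *\<^sub>R u + b *\<^sub>R w) bo)"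
        using opt allocX[OF bo] by blast
    qed
  qed
  have admC: "admissible_region N I i beta B C"
    unfolding admissible_region_def
    using convC convex_connected by (auto simp: C_def)
  have CS: "C = S" using cell admC SC unfolding is_cell_def by blast
  have closedC: "closed C"
  proof -
    have "C = action_space \<inter> (\<Inter>bo\<in>B. \<Inter>y\<in>{y. allocation N I y}.
        {v. F (y i) v + A bo y \<le> F (X bo i) v + A bo (X bo)})"
      unfolding C_def using opt allocX by auto
    moreover have "closed (action_space :: (real^'r) set)"
      unfolding action_space_def
      by (intro closed_Collect_all closed_Collect_le continuous_intros)
    moreover have "closed {v. F (y i) v + A bo y \<le> F (X bo i) v + A bo (X bo)}" for bo y
      unfolding F_def
      by (intro closed_Collect_le continuous_intros continuous_on_add bov_cont)
    ultimately show ?thesis by (auto intro!: closed_Int closed_INT)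
  qed
  have minC: "vmin u w \<in> C" if u: "u \<in> C" and w: "w \<in> C" for u w
    unfolding C_def
  proof (intro CollectI conjI ballI)
    show "vmin u w \<in> action_space"
      using u w unfolding C_def action_space_def vmin_def by simp
  next
    fix bo assume bo: "bo \<in> B"
    have uo: "\<forall>y. allocation N I y \<longrightarrow> F (y i) u + A bo y \<le> F (X bo i) u + A bo (X bo)"
      using u bo opt unfolding C_def by blast
    have wo: "\<forall>y. allocation N I y \<longrightarrow> F (y i) w + A bo y \<le> F (X bo i) w + A bo (X bo)"
      using w bo opt unfolding C_def by blast
    have mu: "F T (vmin u w) \<le> F T u" for T
      unfolding F_def by (rule bov_mono) (simp add: vmin_def)
    have mw: "F T (vmin u w) \<le> F T w" for T
      unfolding F_def by (rule bov_mono) (simp add: vmin_def)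
    have "\<forall>y. allocation N I y \<longrightarrow> F (y i) (vmin u w) + A bo y
          \<le> F (X bo i) (vmin u w) + A bo (X bo)"
    proof (intro allI impI)
      fix y assume y: "allocation N I y"
      show "F (y i) (vmin u w) + A bo y \<le> F (X bo i) (vmin u w) + A bo (X bo)"
        using bov_min[of beta u w "X bo i"] mu[of "y i"] mw[of "y i"] uo y wo
        unfolding F_def by force
    qed
    then show "X bo \<in> opt_allocs N I (combine i beta (vmin u w) bo)"
      using opt allocX[OF bo] by blast
  qed
  define K where "K = S \<inter> cbox 0 s0"
  have s0K: "s0 \<in> K" using s0 Ssub unfolding K_def action_space_def by (auto simp: mem_box_cart)
  have "compact K" unfolding K_def using closedC CS
    by (intro closed_Int_compact compact_cbox) auto
  moreover have "continuous_on K (\<lambda>v. \<Sum>k\<in>UNIV. v $ k)"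
    by (intro continuous_on_sum continuous_on_component continuous_on_id)
  ultimately obtain p where pK: "p \<in> K" and pmin: "\<forall>y\<in>K. (\<Sum>k\<in>UNIV. p $ k) \<le> (\<Sum>k\<in>UNIV. y $ k)"
    using continuous_attains_inf[of K "\<lambda>v. \<Sum>k\<in>UNIV. v $ k"] s0K by blast
  have pS: "p \<in> S" using pK K_def by auto
  have least: "\<forall>k. p $ k \<le> v $ k" if v: "v \<in> S" for v
  proof -
    define m where "m = vmin p v"
    have mS: "m \<in> S" using minC pS v CS m_def by auto
    have "m \<in> cbox 0 s0" using pK mS Ssub
      unfolding m_def K_def action_space_def vmin_def mem_box_cart
      by (fastforce simp: mem_box_cart min_le_iff_disj)
    then have "m \<in> K" using mS K_def by auto
    then have le: "(\<Sum>k\<in>UNIV. p $ k) \<le> (\<Sum>k\<in>UNIV. m $ k)" using pmin by auto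
    have mle: "m $ k \<le> p $ k" for k unfolding m_def vmin_def by simp
    have "(\<Sum>k\<in>UNIV. p $ k - m $ k) \<le> 0" using le by (simp add: sum_subtractf)
    moreover have "\<forall>k\<in>UNIV. 0 \<le> p $ k - m $ k" using mle by simp
    ultimately have "\<forall>k\<in>UNIV. p $ k - m $ k = 0"
      using sum_nonneg_eq_0_iff[of UNIV "\<lambda>k. p $ k - m $ k"]
      by (metis (no_types, lifting) finite_class.finite_UNIV order_antisym sum_nonneg)
    then show ?thesis unfolding m_def vmin_def by (auto simp: min_def split: if_splits)
  qed
  have pp: "pareto_point S p"
    unfolding pareto_point_def using pS least
    by (metis order_antisym vec_eq_iff)
  have uniq: "q = p" if "pareto_point S q" for q
    using that pS least unfolding pareto_point_def by blast
  have ext: "p extreme_point_of S"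
    unfolding extreme_point_of_def
  proof (intro conjI ballI)
    show "p \<in> S" by (rule pS)
  next
    fix a b assume a: "a \<in> S" and b: "b \<in> S"
    show "p \<notin> open_segment a b"
    proof
      assume "p \<in> open_segment a b"
      then obtain u where ab: "a \<noteq> b" and u: "0 < u" "u < 1" and pe: "p = (1 - u) *\<^sub>R a + u *\<^sub>R b"
        by (auto simp: in_segment)
      have "a $ k = b $ k" for k
      proof -
        have "p $ k = (1 - u) * a $ k + u * b $ k" using pe by simp
        moreover have "p $ k \<le> a $ k" "p $ k \<le> b $ k" using least a b by auto
        ultimately have eq: "(1-u)*(a$k - p$k) + u*(b$k - p$k) = 0"
          by (simp add: algebra_simps)
        have n1: "0 \<le> (1-u)*(a$k - p$k)" using u \<open>p $ k \<le> a $ k\<close> by simp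
        have n2: "0 \<le> u*(b$k - p$k)" using u \<open>p $ k \<le> b $ k\<close> by simp
        have "(1-u)*(a$k - p$k) = 0" "u*(b$k - p$k) = 0"
          using eq n1 n2 add_nonneg_eq_0_iff by blast+
        then show ?thesis using u by simp
      qed
      then show False using ab by (simp add: vec_eq_iff)
    qed
  qed
  show ?thesis using pp uniq ext by blast
qed

end
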